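(* For every incentive compatible and individually rational mechanism $(f,p)$ there exists another incentive compatible and individually rational mechanism $(f',p')$ such that $\Pi(f',p')=\Pi(f,p)$ and $f'_1(v,k)=k\,f'_2(v,k)$ for all $(v,k)\in V\times K$.
   Context: An agent has private type $(v,k)\in V\times K$, $V=[0,1]$, $K=(0,1]$, and from an outcome $(a_1,a_2,t)$ with $a_1,a_2\in[0,1]$ (quantities of two divisible goods) and $t\in\mathbb{R}$ (payment by the agent) gets utility $U_{(v,k)}(a_1,a_2,t)=v\min\{a_1/k,a_2\}-t$. A mechanism is a pair $(f,p)$ with $f=(f_1,f_2):V\times K\to[0,1]^2$, $p:V\times K\to\mathbb{R}$. It is incentive compatible if $U_{(v,k)}(f(v,k),p(v,k))\ge U_{(v,k)}(f(v',k'),p(v',k'))$ for all types $(v,k),(v',k')$, and individually rational if $U_{(v,k)}(f(v,k),p(v,k))\ge0$ for all $(v,k)$. The type is distributed according to a joint distribution $G$ on $V\times K$ with strictly positive density, and the expected revenue of $(f,p)$ is $\Pi(f,p)=\int_{V\times K}p(v,k)\,dG(v,k)$. *)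

theory Defs
  imports "HOL-Probability.Probability"
begin

definition TypeSpace :: "(real \<times> real) set" where
  "TypeSpace = {0..1} \<times> {0<..1}"

definition U :: "real \<times> real \<Rightarrow> real \<times> real \<Rightarrow> real \<Rightarrow> real" where
  "U vk a t = fst vk * min (fst a / snd vk) (snd a) - t"

definition mechanism :: "(real \<times> real \<Rightarrow> real \<times> real) \<Rightarrow> (real \<times> real \<Rightarrow> real) \<Rightarrow> bool" where
  "mechanism f p \<longleftrightarrow> (\<forall>x\<in>TypeSpace. f x \<in> {0..1} \<times> {0..1})"

definition IC :: "(real \<times> real \<Rightarrow> real \<times> real) \<Rightarrow> (real \<times> real \<Rightarrow> real) \<Rightarrow> bool" where
  "IC f p \<longleftrightarrow> (\<forall>x\<in>TypeSpace. \<forall>y\<in>TypeSpace. U x (f x) (p x) \<ge> U x (f y) (p y))"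

definition IR :: "(real \<times> real \<Rightarrow> real \<times> real) \<Rightarrow> (real \<times> real \<Rightarrow> real) \<Rightarrow> bool" where
  "IR f p \<longleftrightarrow> (\<forall>x\<in>TypeSpace. U x (f x) (p x) \<ge> 0)"

definition type_distribution :: "(real \<times> real) measure \<Rightarrow> (real \<times> real \<Rightarrow> real) \<Rightarrow> bool" where
  "type_distribution G g \<longleftrightarrow>
     g \<in> borel_measurable borel \<and>
     (\<forall>x\<in>TypeSpace. 0 < g x) \<and> (\<forall>x. x \<notin> TypeSpace \<longrightarrow> g x = 0) \<and>
     G = density lborel (\<lambda>x. ennreal (g x)) \<and> prob_space G"

definition revenue :: "(real \<times> real) measure \<Rightarrow> (real \<times> real \<Rightarrow> real) \<Rightarrow> real" where
  "revenue G p = (\<integral>x. p x \<partial>G)"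

end

theory Submission
  imports Defs
begin

definition mm :: "(real \<times> real \<Rightarrow> real \<times> real) \<Rightarrow> real \<times> real \<Rightarrow> real" where
  "mm f x = min (fst (f x) / snd x) (snd (f x))"

lemma own_eq:
  assumes "x \<in> TypeSpace"
  shows "U x (snd x * mm f x, mm f x) t = U x (f x) t"
  using assms by (auto simp: U_def mm_def TypeSpace_def)

lemma dev_le:
  assumes "x \<in> TypeSpace" "y \<in> TypeSpace"
  shows "U x (snd y * mm f y, mm f y) t \<le> U x (f y) t"
proof -
  obtain v k where x: "x = (v,k)" and v: "0 \<le> v" and k: "0 < k"
    using assms(1) by (cases x) (auto simp: TypeSpace_def)
  obtain w j where y: "y = (w,j)" and j: "0 < j"
    using assms(2) by (cases y) (auto simp: TypeSpace_def)
  have m1: "j * mm f y \<le> fst (f y)" using j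
    by (simp add: mm_def y min_def field_simps)
  have m2: "mm f y \<le> snd (f y)" by (simp add: mm_def)
  have "j * mm f y / k \<le> fst (f y) / k" using m1 k by (simp add: divide_right_mono)
  hence "min (j * mm f y / k) (mm f y) \<le> min (fst (f y) / k) (snd (f y))"
    using m2 by linarith
  hence "v * min (j * mm f y / k) (mm f y) \<le> v * min (fst (f y) / k) (snd (f y))"
    using v by (rule mult_left_mono)
  thus ?thesis by (simp add: U_def x y)
qed

theorem proposition2:
  fixes G :: "(real \<times> real) measure" and g :: "real \<times> real \<Rightarrow> real"
    and f :: "real \<times> real \<Rightarrow> real \<times> real" and p :: "real \<times> real \<Rightarrow> real"
  assumes "type_distribution G g"
    and "mechanism f p" and "IC f p" and "IR f p"
  shows "\<exists>f' p'. mechanism f' p' \<and> IC f' p' \<and> IR f' p' \<and>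
           revenue G p' = revenue G p \<and>
           (\<forall>x\<in>TypeSpace. fst (f' x) = snd x * snd (f' x))"
proof (intro exI conjI)
  let ?f = "\<lambda>x. (snd x * mm f x, mm f x)"
  show "mechanism ?f p"
    unfolding mechanism_def
  proof
    fix x assume x: "x \<in> TypeSpace"
    then obtain v k where xe: "x = (v,k)" and k: "0 < k" "k \<le> 1"
      by (cases x) (auto simp: TypeSpace_def)
    have f: "fst (f x) \<in> {0..1}" "snd (f x) \<in> {0..1}"
      using assms(2) x unfolding mechanism_def by (auto simp: mem_Times_iff)
    have "0 \<le> mm f x" using f k by (auto simp: mm_def xe)
    moreover have "mm f x \<le> 1" using f by (auto simp: mm_def)
    moreover have "k * mm f x \<le> 1"
    proof -
      have "k * mm f x \<le> k * (fst (f x) / k)" using k unfolding mm_def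
        by (intro mult_left_mono) (auto simp: xe)
      thus ?thesis using f k xe by simp
    qed
    moreover have "0 \<le> k * mm f x" using k calculation by simp
    ultimately show "?f x \<in> {0..1} \<times> {0..1}" by (simp add: xe)
  qed
  show "IC ?f p" unfolding IC_def
  proof (intro ballI)
    fix x y assume x: "x \<in> TypeSpace" and y: "y \<in> TypeSpace"
    have "U x (?f y) (p y) \<le> U x (f y) (p y)" using dev_le[OF x y] .
    also have "\<dots> \<le> U x (f x) (p x)" using assms(3) x y unfolding IC_def by blast
    also have "\<dots> = U x (?f x) (p x)" using own_eq[OF x] by simp
    finally show "U x (?f y) (p y) \<le> U x (?f x) (p x)" .
  qed
  show "IR ?f p" using assms(4) own_eq unfolding IR_def by simp
  show "revenue G p = revenue G p" ..
  show "\<forall>x\<in>TypeSpace. fst (?f x) = snd x * snd (?f x)" by simp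
qed

end
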